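(* Let $k \geq \ell \geq 2$, $k \geq 3$ and $n > k+\ell$. Then $g(n,k,\ell) < h(n,k,\ell)$, where $$g(n,k,\ell) = \sum_{2 \leq i \leq \ell+1} \binom{\ell+1}{i}\binom{n-\ell-1}{k-i} + \binom{\ell+1}{\ell},\qquad h(n,k,\ell) = \binom{n}{k} - 2\binom{n-\ell}{k} + \binom{n-2\ell}{k} + 2.$$
   Context: Binomial coefficients $\binom{a}{b}$ are $0$ when $b<0$ or $b>a$. *)

theory Defs
  imports Main
begin

definition ibinom :: "int \<Rightarrow> int \<Rightarrow> int" where
  "ibinom a b = (if b < 0 \<or> b > a then 0 else int (nat a choose nat b))"

definition g_fun :: "int \<Rightarrow> int \<Rightarrow> int \<Rightarrow> int" where
  "g_fun n k l = (\<Sum>i\<in>{2..l+1}. ibinom (l+1) i * ibinom (n-l-1) (k-i)) + ibinom (l+1) l"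

definition h_fun :: "int \<Rightarrow> int \<Rightarrow> int \<Rightarrow> int" where
  "h_fun n k l = ibinom n k - 2 * ibinom (n-l) k + ibinom (n-2*l) k + 2"

end

theory Submission
  imports Defs
begin



lemma ib_nat: "ibinom (int a) (int b) = int (a choose b)"
  by (auto simp: ibinom_def binomial_eq_0)

lemma ib_sub: "ibinom (int a) (int K - int i) = (if i \<le> K then int (a choose (K - i)) else 0)"
  by (auto simp: ibinom_def binomial_eq_0 of_nat_diff nat_diff_distrib)

lemma vsum_nat: "(\<Sum>i\<in>{0..M}. (M choose i) * (if i \<le> K then a choose (K-i) else 0)) = (M + a) choose K"
proof -
  have "(\<Sum>i\<in>{0..M}. (M choose i) * (if i \<le> K then a choose (K-i) else 0))
      = (\<Sum>i\<in>{0..M+K}. (M choose i) * (if i \<le> K then a choose (K-i) else 0))"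
    by (rule sum.mono_neutral_left) (auto simp: binomial_eq_0)
  also have "\<dots> = (\<Sum>i\<in>{..K}. (M choose i) * (a choose (K-i)))"
    by (rule sum.mono_neutral_cong_right) auto
  also have "\<dots> = (M + a) choose K" by (rule vandermonde)
  finally show ?thesis .
qed

lemma tele: "L \<le> m \<Longrightarrow> K \<ge> 1 \<Longrightarrow> (m choose K) = ((m-L) choose K) + (\<Sum>j\<in>{1..L}. (m-j) choose (K-1))"
proof (induction L)
  case 0 then show ?case by simp
next
  case (Suc L)
  have "((m - L) choose K) = ((m - Suc L) choose K) + ((m - Suc L) choose (K-1))"
  proof -
    have e1: "m - L = Suc (m - Suc L)" using Suc.prems by simp
    have e2: "K = Suc (K-1)" using Suc.prems by simp
    show ?thesis using binomial_Suc_Suc[of "m - Suc L" "K-1"] by (simp only: e1[symmetric] e2[symmetric])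
  qed
  then show ?case using Suc by (simp add: add.commute add.left_commute)
qed

lemma bound: "L \<ge> 2 \<Longrightarrow> m \<ge> K + 1 \<Longrightarrow> K \<ge> 3 \<Longrightarrow> L \<le> m \<Longrightarrow>
  (\<Sum>j\<in>{2..L}. (m-j) choose (K-1)) + 2*(L-1) \<le> (L-1) * ((m-1) choose (K-1))"
proof -
  assume a: "L \<ge> 2" "m \<ge> K + 1" "K \<ge> 3" "L \<le> m"
  have pas: "((m-1) choose (K-1)) = ((m-2) choose (K-1)) + ((m-2) choose (K-2))"
  proof -
    have e1: "m - 1 = Suc (m - 2)" using a by simp
    have e2: "K - 1 = Suc (K-2)" using a by simp
    show ?thesis by (subst e1, subst e2, subst binomial_Suc_Suc) (simp add: e2[symmetric])
  qed
  have "((K-1) choose (K-2)) \<le> ((m-2) choose (K-2))" using a by (intro binomial_right_mono) auto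
  moreover have "((K-1) choose (K-2)) = K - 1"
    using binomial_Suc_n[of "K-2"] a by (simp add: Suc_diff_Suc numeral_2_eq_2)
  ultimately have big: "((m-2) choose (K-2)) \<ge> 2" using a by simp
  have "\<forall>j\<in>{2..L}. ((m-j) choose (K-1)) + 2 \<le> ((m-1) choose (K-1))"
  proof
    fix j assume "j \<in> {2..L}"
    hence "(m-j) choose (K-1) \<le> (m-2) choose (K-1)" by (intro binomial_right_mono) auto
    then show "((m-j) choose (K-1)) + 2 \<le> ((m-1) choose (K-1))" using pas big by simp
  qed
  then have "(\<Sum>j\<in>{2..L}. ((m-j) choose (K-1)) + 2) \<le> (\<Sum>j\<in>{2..L}. (m-1) choose (K-1))"
    by (intro sum_mono) auto
  moreover have "(\<Sum>j\<in>{2..L}. ((m-j) choose (K-1)) + 2) = (\<Sum>j\<in>{2..L}. ((m-j) choose (K-1))) + 2*(L-1)"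
    using a by (simp only: sum.distrib sum_constant card_atLeastAtMost) simp
  moreover have "(\<Sum>j\<in>{2..L}. ((m-1) choose (K-1))) = (L-1) * ((m-1) choose (K-1))"
    using a by (simp only: sum_constant card_atLeastAtMost) simp
  ultimately show ?thesis by simp
qed

lemma gsum_nat: "int a = A \<Longrightarrow>
  (\<Sum>i\<in>{2..int L+1}. ibinom (int L+1) i * ibinom A (int K - i))
  = (\<Sum>i\<in>{2..L+1}. int ((L+1) choose i) * (if i \<le> K then int (a choose (K-i)) else 0))"
proof -
  assume A: "int a = A"
  have "{2..int L+1} = int ` {2..L+1}" by (simp add: image_int_atLeastAtMost)
  then have "(\<Sum>i\<in>{2..int L+1}. ibinom (int L+1) i * ibinom A (int K - i))
     = (\<Sum>i\<in>{2..L+1}. ibinom (int L+1) (int i) * ibinom A (int K - int i))"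
    by (simp add: sum.reindex)
  also have "\<dots> = (\<Sum>i\<in>{2..L+1}. int ((L+1) choose i) * (if i \<le> K then int (a choose (K-i)) else 0))"
  proof (rule sum.cong)
    fix i assume "i \<in> {2..L+1}"
    have "ibinom (int L+1) (int i) = int ((L+1) choose i)" using ib_nat[of "L+1" i] by (simp add: add.commute)
    moreover have "ibinom A (int K - int i) = (if i \<le> K then int (a choose (K-i)) else 0)"
      using ib_sub[of a K i] A by simp
    ultimately show "ibinom (int L+1) (int i) * ibinom A (int K - int i) = int ((L+1) choose i) * (if i \<le> K then int (a choose (K-i)) else 0)" by simp
  qed simp
  finally show ?thesis .
qed

lemma split01: fixes L :: nat and f :: "nat \<Rightarrow> int" shows "(\<Sum>i\<in>{0..L+1}. f i) = f 0 + f 1 + (\<Sum>i\<in>{2..L+1}. (f i :: int))"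
proof -
  have "{0..L+1} = {0,1} \<union> {2..L+1}" by auto
  then show ?thesis by (simp add: sum.union_disjoint)
qed

lemma fin: "(S::int) + 2*(L-1) \<le> P - A1 \<Longrightarrow> MK = aK + A1 \<Longrightarrow> MK = ML + A1 + S \<Longrightarrow> 2 \<le> L \<Longrightarrow>
  C - aK - (P + A1) + L + 1 < C - 2*MK + ML + 2" by (simp add: algebra_simps)

theorem proposition4p2:
  fixes n k l :: int
  assumes "k \<ge> l" and "l \<ge> 2" and "k \<ge> 3" and "n > k + l"
  shows "g_fun n k l < h_fun n k l"
proof -
  define N where "N = nat n"
  define K where "K = nat k"
  define L where "L = nat l"
  have NKL: "n = int N" "k = int K" "l = int L" using assms by (simp_all add: N_def K_def L_def)
  have h: "K \<ge> L" "L \<ge> 2" "K \<ge> 3" "N > K + L" using assms NKL by auto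
  define a where "a = N - L - 1"
  define m where "m = N - L"
  have am: "a = m - 1" "m \<ge> K + 1" "L \<le> m" using h by (auto simp: a_def m_def)
  define f where "f i = int ((L+1) choose i) * (if i \<le> K then int (a choose (K-i)) else 0)" for i
  have vs: "(\<Sum>i\<in>{0..L+1}. f i) = int (N choose K)"
  proof -
    have "(\<Sum>i\<in>{0..L+1}. f i) = int (\<Sum>i\<in>{0..L+1}. ((L+1) choose i) * (if i \<le> K then a choose (K-i) else 0))"
      unfolding f_def of_nat_sum by (intro sum.cong) auto
    also have "\<dots> = int (N choose K)" using vsum_nat[of "L+1" K a] h by (simp add: a_def)
    finally show ?thesis .
  qed
  have f0: "f 0 = int (a choose K)" by (simp add: f_def)
  have f1: "f 1 = int (L+1) * int (a choose (K-1))" using h by (simp add: f_def)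
  have gs: "(\<Sum>i\<in>{2..l+1}. ibinom (l+1) i * ibinom (n-l-1) (k-i)) = (\<Sum>i\<in>{2..L+1}. f i)"
    unfolding f_def NKL by (rule gsum_nat) (use h in \<open>simp add: a_def\<close>)
  have gl: "ibinom (l+1) l = int L + 1" using ib_nat[of "L+1" L] NKL by (simp add: add.commute)
  have g: "g_fun n k l = int (N choose K) - int (a choose K) - int (L+1) * int (a choose (K-1)) + int L + 1"
    unfolding g_fun_def gs gl using split01[of f L] vs f0 f1 by simp
  have hh: "h_fun n k l = int (N choose K) - 2 * int (m choose K) + int ((m-L) choose K) + 2"
  proof -
    have e: "n - l = int m" "n - 2*l = int (m - L)" using h NKL by (auto simp: m_def)
    show ?thesis unfolding h_fun_def e by (simp only: NKL(1,2) ib_nat)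
  qed
  have pas: "m choose K = (a choose K) + (a choose (K-1))"
  proof -
    have e1: "m = Suc a" using am h by simp
    have e2: "K = Suc (K-1)" using h by simp
    show ?thesis using binomial_Suc_Suc[of a "K-1"] by (simp only: e1 e2[symmetric])
  qed
  have te: "m choose K = ((m-L) choose K) + (\<Sum>j\<in>{1..L}. (m-j) choose (K-1))"
    using tele[of L m K] am h by simp
  have sp: "(\<Sum>j\<in>{1..L}. (m-j) choose (K-1)) = (a choose (K-1)) + (\<Sum>j\<in>{2..L}. (m-j) choose (K-1))"
  proof -
    have "{1..L} = insert 1 {2..L}" using h by auto
    then show ?thesis using am by simp
  qed
  have bd: "(\<Sum>j\<in>{2..L}. (m-j) choose (K-1)) + 2*(L-1) \<le> (L-1) * (a choose (K-1))"
    using bound[OF h(2) am(2) h(3) am(3)] am(1) by simp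
  define S where "S = (\<Sum>j\<in>{2..L}. (m-j) choose (K-1))"
  define A1 where "A1 = a choose (K-1)"
  have bdi: "int S + 2*(int L - 1) \<le> (int L - 1) * int A1"
  proof -
    have "int (S + 2*(L-1)) \<le> int ((L-1) * A1)" using bd unfolding S_def A1_def by linarith
    then show ?thesis using h by (simp add: of_nat_diff)
  qed
  have r1: "int (m choose K) = int (a choose K) + int A1" using pas A1_def by simp
  have r2: "int (m choose K) = int ((m-L) choose K) + int A1 + int S" using te sp A1_def S_def by simp
  have "g_fun n k l = int (N choose K) - int (a choose K) - (int L + 1) * int A1 + int L + 1"
    using g A1_def by simp
  moreover have "(int L + 1) * int A1 = int L * int A1 + int A1" "(int L - 1) * int A1 = int L * int A1 - int A1"
    by (simp_all add: algebra_simps)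
  ultimately have G: "g_fun n k l = int (N choose K) - int (a choose K) - (int L * int A1 + int A1) + int L + 1"
    and B: "int S + 2*(int L - 1) \<le> int L * int A1 - int A1" using bdi by auto
  have L2: "int L \<ge> 2" using h by simp
  show ?thesis unfolding G hh using B r1 r2 L2
    by (rule fin)
qed
end
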